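(* Fix $\omega_T>0$ and consider the multi-period mean-variance problem $$\max_{\text{admissible }u}\ \mathbb{E}(x_T)-\omega_T\mathrm{Var}(x_T)\quad\text{subject to } x_{t+1}=s_tx_t+P_t'u_t,\ t=0,\dots,T-1.$$ An optimal strategy is $$u_t^*=-s_tK_t\,x_t+K_t\Big[x_0\prod_{k=0}^{T-1}s_k+\frac{1}{2\omega_T\prod_{k=0}^{T-1}(1-B_k)}\Big]\prod_{k=t+1}^{T-1}s_k^{-1},\qquad t=0,\dots,T-1.$$ Under this strategy: $$\mathbb{E}(x_t)=x_0\prod_{k=0}^{t-1}s_k+\frac{1}{2\omega_T}\prod_{k=t}^{T-1}s_k^{-1}\cdot\frac{1-\prod_{k=0}^{t-1}(1-B_k)}{\prod_{k=0}^{T-1}(1-B_k)},\qquad t=0,\dots,T,$$ $$\mathrm{Var}(x_T)=\frac{1-\prod_{k=0}^{T-1}(1-B_k)}{4\omega_T^2\prod_{k=0}^{T-1}(1-B_k)}.$$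
   Context: Market model. Fix integers $T\ge1$ and $n\ge1$. For $t=0,\dots,T-1$ the following are given: - a deterministic riskless gross return $s_t>1$; - a random excess-return vector $P_t\in\mathbb{R}^n$. The vectors $P_0,\dots,P_{T-1}$ are independent and square integrable. Write $M_t=\mathbb{E}(P_tP_t')$ and $m_t=\mathbb{E}(P_t)$, and assume $M_t$ is positive definite. Set $$B_t=m_t'M_t^{-1}m_t,\qquad K_t=M_t^{-1}m_t,$$ and assume $0<B_t<1$ for all $t$. Wealth and strategies. The initial wealth $x_0\in\mathbb{R}$ is deterministic, and $x_{t+1}=s_tx_t+P_t'u_t$. A strategy $(u_0,\dots,u_{T-1})$ is admissible if each $u_t\in\mathbb{R}^n$ is square integrable and $\sigma(P_0,\dots,P_{t-1})$-measurable. Conventions: an empty product equals $1$. *)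

theory Defs
  imports "HOL-Probability.Probability"
begin

definition mom2 :: "'a measure \<Rightarrow> ('a \<Rightarrow> real^'n) \<Rightarrow> real^'n^'n" where
  "mom2 M X = (\<chi> i j. integral\<^sup>L M (\<lambda>w. X w $ i * X w $ j))"

definition mom1 :: "'a measure \<Rightarrow> ('a \<Rightarrow> real^'n) \<Rightarrow> real^'n" where
  "mom1 M X = (\<chi> i. integral\<^sup>L M (\<lambda>w. X w $ i))"

definition Kvec :: "'a measure \<Rightarrow> ('a \<Rightarrow> real^'n) \<Rightarrow> real^'n" where
  "Kvec M X = matrix_inv (mom2 M X) *v mom1 M X"

definition Bval :: "'a measure \<Rightarrow> ('a \<Rightarrow> real^'n) \<Rightarrow> real" where
  "Bval M X = mom1 M X \<bullet> Kvec M X"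

fun wealth :: "(nat \<Rightarrow> real) \<Rightarrow> (nat \<Rightarrow> 'a \<Rightarrow> real^'n) \<Rightarrow> (nat \<Rightarrow> 'a \<Rightarrow> real^'n)
    \<Rightarrow> real \<Rightarrow> nat \<Rightarrow> 'a \<Rightarrow> real" where
  "wealth s P u x0 0 w = x0"
| "wealth s P u x0 (Suc t) w = s t * wealth s P u x0 t w + P t w \<bullet> u t w"

fun fb_wealth :: "(nat \<Rightarrow> real) \<Rightarrow> (nat \<Rightarrow> 'a \<Rightarrow> real^'n) \<Rightarrow> (nat \<Rightarrow> real \<Rightarrow> real^'n)
    \<Rightarrow> real \<Rightarrow> nat \<Rightarrow> 'a \<Rightarrow> real" where
  "fb_wealth s P g x0 0 w = x0"
| "fb_wealth s P g x0 (Suc t) w = s t * fb_wealth s P g x0 t w + P t w \<bullet> g t (fb_wealth s P g x0 t w)"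

definition past_sigma :: "'a measure \<Rightarrow> (nat \<Rightarrow> 'a \<Rightarrow> real^'n) \<Rightarrow> nat \<Rightarrow> 'a measure" where
  "past_sigma M P t = sigma (space M) {P i -` A \<inter> space M | i A. i < t \<and> A \<in> sets borel}"

definition admissible :: "'a measure \<Rightarrow> (nat \<Rightarrow> 'a \<Rightarrow> real^'n) \<Rightarrow> nat \<Rightarrow> (nat \<Rightarrow> 'a \<Rightarrow> real^'n) \<Rightarrow> bool" where
  "admissible M P T u \<longleftrightarrow>
     (\<forall>t<T. u t \<in> borel_measurable (past_sigma M P t) \<and> integrable M (\<lambda>w. (norm (u t w))\<^sup>2))"

definition mv_feedback :: "'a measure \<Rightarrow> (nat \<Rightarrow> 'a \<Rightarrow> real^'n) \<Rightarrow> (nat \<Rightarrow> real) \<Rightarrow> nat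
    \<Rightarrow> real \<Rightarrow> real \<Rightarrow> nat \<Rightarrow> real \<Rightarrow> real^'n" where
  "mv_feedback M P s T x0 wT t x =
     (- s t * x) *\<^sub>R Kvec M (P t)
     + ((x0 * (\<Prod>k<T. s k) + 1 / (2 * wT * (\<Prod>k<T. 1 - Bval M (P k))))
          * (\<Prod>k\<in>{t+1..<T}. inverse (s k))) *\<^sub>R Kvec M (P t)"

end

theory Submission
  imports Defs
begin


locale mvsetup = prob_space +
  fixes P :: "nat \<Rightarrow> 'a \<Rightarrow> real^'n" and T :: nat
  assumes Pmeas: "\<And>t. t<T \<Longrightarrow> P t \<in> borel_measurable M"
  and Pind: "indep_vars (\<lambda>_. borel) P {..<T}"
  and PL2: "\<And>t. t<T \<Longrightarrow> integrable M (\<lambda>w. (norm (P t w))\<^sup>2)"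
begin

abbreviation F where "F t \<equiv> past_sigma M P t"

lemma gen_Pow: "{P i -` A \<inter> space M | i A. i < t \<and> A \<in> sets borel} \<subseteq> Pow (space M)"
  by auto

lemma F_space[simp]: "space (F t) = space M"
  unfolding past_sigma_def by (simp add: space_measure_of_conv)

lemma F_sets_eq: "sets (F t) = sigma_sets (space M) {P i -` A \<inter> space M | i A. i < t \<and> A \<in> sets borel}"
  unfolding past_sigma_def by (rule sets_measure_of[OF gen_Pow])

lemma F_sets: assumes "t \<le> T" shows "sets (F t) \<subseteq> sets M"
proof -
  have "{P i -` A \<inter> space M | i A. i < t \<and> A \<in> sets borel} \<subseteq> sets M"
    using Pmeas assms by (auto intro!: measurable_sets)
  then show ?thesis unfolding F_sets_eq by (rule sets.sigma_sets_subset)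
qed

lemma F_mono: assumes "t \<le> t'" shows "sets (F t) \<subseteq> sets (F t')"
  unfolding F_sets_eq using assms by (intro sigma_sets_subseteq) (fastforce)

lemma F_Pmeas: assumes "i < t" shows "P i \<in> borel_measurable (F t)"
proof (rule measurableI)
  fix A :: "(real^'n) set" assume "A \<in> sets borel"
  then show "P i -` A \<inter> space (F t) \<in> sets (F t)"
    unfolding F_sets_eq F_space using assms by (intro sigma_sets.Basic) auto
qed simp

lemma meas_up: assumes "t \<le> T" "f \<in> borel_measurable (F t)" shows "f \<in> borel_measurable M"
  using assms F_sets by (intro measurable_from_subalg[of M "F t"]) (auto simp: subalgebra_def)

lemma meas_mono: assumes "t \<le> t'" "f \<in> borel_measurable (F t)" shows "f \<in> borel_measurable (F t')"
  using assms F_mono by (intro measurable_from_subalg[of "F t'" "F t"]) (auto simp: subalgebra_def)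

lemma indep_set_mono:
  assumes "indep_set A B" "A' \<subseteq> A" "B' \<subseteq> B" shows "indep_set A' B'"
  unfolding indep_set_def
  by (rule indep_sets_mono_sets[OF assms(1)[unfolded indep_set_def]]) (use assms(2,3) in \<open>auto split: bool.split\<close>)

lemma past_indep: assumes "t < T"
  shows "indep_set (sets (F t)) (sigma_sets (space M) {P t -` A \<inter> space M | A. A \<in> sets borel})"
proof -
  define E where "E i = {P i -` A \<inter> space M | A. A \<in> sets (borel :: (real^'n) measure)}" for i
  have "indep_sets (\<lambda>i. sigma_sets (space M) (E i)) {..<T}"
    using Pind unfolding indep_vars_def E_def by simp
  then have ind: "indep_sets E {..<T}"
    by (rule indep_sets_mono_sets) (auto intro: sigma_sets.Basic)
  define I where "I = case_bool {..<t} {t}"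
  have U: "(\<Union>j. I j) = {..t}" unfolding I_def by (auto split: bool.split simp: UNIV_bool)
  have ind2: "indep_sets E (\<Union>j\<in>UNIV. I j)"
    unfolding U using assms by (intro indep_sets_mono_index[OF _ ind]) auto
  have st: "Int_stable (E i)" for i
    unfolding Int_stable_def E_def
  proof safe
    fix A B :: "(real^'n) set" assume "A \<in> sets borel" "B \<in> sets borel"
    then show "\<exists>C. (P i -` A \<inter> space M) \<inter> (P i -` B \<inter> space M) = P i -` C \<inter> space M \<and> C \<in> sets borel"
      by (intro exI[of _ "A \<inter> B"]) auto
  qed
  have dj: "disjoint_family_on I UNIV"
    unfolding disjoint_family_on_def I_def by (auto split: bool.split)
  have "indep_sets (\<lambda>j. sigma_sets (space M) (\<Union>i\<in>I j. E i)) UNIV"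
    by (rule indep_sets_collect_sigma[OF ind2 st dj])
  moreover have "(\<lambda>j. sigma_sets (space M) (\<Union>i\<in>I j. E i)) =
     case_bool (sets (F t)) (sigma_sets (space M) {P t -` A \<inter> space M | A. A \<in> sets borel})"
  proof
    fix j show "sigma_sets (space M) (\<Union>i\<in>I j. E i) = case_bool (sets (F t)) (sigma_sets (space M) {P t -` A \<inter> space M | A. A \<in> sets borel}) j"
    proof (cases j)
      case True
      have "(\<Union>i\<in>{..<t}. E i) = {P i -` A \<inter> space M | i A. i < t \<and> A \<in> sets borel}"
        unfolding E_def by auto
      then show ?thesis using True unfolding I_def F_sets_eq by simp
    next
      case False then show ?thesis unfolding I_def E_def by simp
    qed
  qed
  ultimately show ?thesis unfolding indep_set_def by simp
qed

lemma IND: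
  fixes Z :: "'a \<Rightarrow> real" and g :: "real^'n \<Rightarrow> real"
  assumes t: "t < T" and Z: "Z \<in> borel_measurable (F t)" and g: "g \<in> borel_measurable borel"
    and iZ: "integrable M Z" and ig: "integrable M (\<lambda>w. g (P t w))"
  shows "integrable M (\<lambda>w. Z w * g (P t w))"
    "(\<integral>w. Z w * g (P t w) \<partial>M) = (\<integral>w. Z w \<partial>M) * (\<integral>w. g (P t w) \<partial>M)"
proof -
  have ZM: "Z \<in> borel_measurable M" using meas_up[of t Z] t Z by simp
  have gM: "(\<lambda>w. g (P t w)) \<in> borel_measurable M" using g Pmeas[OF t] by measurable
  have s1: "sigma_sets (space M) {Z -` A \<inter> space M | A. A \<in> sets borel} \<subseteq> sets (F t)"
  proof -
    have "{Z -` A \<inter> space M | A. A \<in> sets borel} \<subseteq> sets (F t)"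
      using Z by (auto dest: measurable_sets[where M="F t"])
    then show ?thesis using sets.sigma_sets_subset[of _ "F t"] by simp
  qed
  have s2: "sigma_sets (space M) {(\<lambda>w. g (P t w)) -` A \<inter> space M | A. A \<in> sets borel}
     \<subseteq> sigma_sets (space M) {P t -` A \<inter> space M | A. A \<in> sets borel}"
  proof (rule sigma_sets_subseteq, safe)
    fix A :: "real set" assume "A \<in> sets borel"
    then have "g -` A \<in> sets borel" using g by (metis measurable_sets space_borel vimage_Int UNIV_I Int_UNIV_right)
    then show "\<exists>B. (\<lambda>w. g (P t w)) -` A \<inter> space M = P t -` B \<inter> space M \<and> B \<in> sets borel"
      by (intro exI[of _ "g -` A"]) auto
  qed
  have "indep_var borel Z borel (\<lambda>w. g (P t w))"
    unfolding indep_var_eq using ZM gM indep_set_mono[OF past_indep[OF t] s1 s2] by simp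
  then show "integrable M (\<lambda>w. Z w * g (P t w))"
    "(\<integral>w. Z w * g (P t w) \<partial>M) = (\<integral>w. Z w \<partial>M) * (\<integral>w. g (P t w) \<partial>M)"
    using iZ ig by (auto intro: indep_var_integrable indep_var_lebesgue_integral)
qed

end



lemma meas_nth:
  "f \<in> borel_measurable N \<Longrightarrow> (\<lambda>x. f x $ i :: real) \<in> borel_measurable N"
  using measurable_compose[OF _ borel_measurable_nth] by blast

lemma abs_prod_sq: "\<bar>a*b\<bar> \<le> a^2 + (b::real)^2"
proof -
  have "0 \<le> (\<bar>a\<bar> - \<bar>b\<bar>)^2" by simp
  then have "2*(\<bar>a\<bar>*\<bar>b\<bar>) \<le> \<bar>a\<bar>^2+\<bar>b\<bar>^2" by (simp add: power2_diff)
  then have "2*\<bar>a*b\<bar> \<le> a^2+b^2" by (simp add: abs_mult)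
  moreover have "0 \<le> \<bar>a*b\<bar>" by simp
  ultimately show ?thesis by linarith
qed

lemma (in prob_space) L2prod:
  fixes f g :: "'a \<Rightarrow> real"
  assumes "f \<in> borel_measurable M" "g \<in> borel_measurable M"
    "integrable M (\<lambda>w. (f w)^2)" "integrable M (\<lambda>w. (g w)^2)"
  shows "integrable M (\<lambda>w. f w * g w)"
proof (rule Bochner_Integration.integrable_bound[of _ "\<lambda>w. (f w)^2 + (g w)^2"])
  show "integrable M (\<lambda>w. (f w)^2 + (g w)^2)" using assms by simp
  show "(\<lambda>w. f w * g w) \<in> borel_measurable M" using assms by measurable
  show "AE x in M. norm (f x * g x) \<le> norm ((f x)\<^sup>2 + (g x)\<^sup>2)"
    using abs_prod_sq by (intro AE_I2) (simp add: abs_prod_sq add_nonneg_nonneg)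
qed

lemma (in prob_space) L2_L1:
  fixes f :: "'a \<Rightarrow> real"
  assumes "f \<in> borel_measurable M" "integrable M (\<lambda>w. (f w)^2)"
  shows "integrable M f"
  using L2prod[OF assms(1) _ assms(2), of "\<lambda>_. 1"] by simp

lemma (in prob_space) L2_comp:
  fixes U :: "'a \<Rightarrow> real^'n"
  assumes "U \<in> borel_measurable M" "integrable M (\<lambda>w. (norm (U w))^2)"
  shows "integrable M (\<lambda>w. (U w $ i)^2)"
proof (rule Bochner_Integration.integrable_bound[OF assms(2)])
  show "(\<lambda>w. (U w $ i)^2) \<in> borel_measurable M" using meas_nth[OF assms(1)] by measurable
  show "AE x in M. norm ((U x $ i)\<^sup>2) \<le> norm ((norm (U x))\<^sup>2)"
    by (intro AE_I2) (simp, metis abs_ge_zero power2_abs power_mono component_le_norm_cart)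
qed




context mvsetup begin

lemma KEY:
  fixes Y :: "'a \<Rightarrow> real" and U :: "'a \<Rightarrow> real^'n" and c :: real
  assumes t: "t<T" and Ym: "Y \<in> borel_measurable (F t)" and Um: "U \<in> borel_measurable (F t)"
    and Y2: "integrable M (\<lambda>w. (Y w)^2)" and U2: "integrable M (\<lambda>w. (norm (U w))^2)"
  shows "integrable M (\<lambda>w. (c*Y w + P t w \<bullet> U w)^2)"
   and "integral\<^sup>L M (\<lambda>w. (c*Y w + P t w \<bullet> U w)^2) = integral\<^sup>L M (\<lambda>w. c^2*(Y w)^2 + 2*c*Y w*(U w \<bullet> mom1 M (P t)) + U w \<bullet> (mom2 M (P t) *v U w))"
   and "integrable M (\<lambda>w. c^2*(Y w)^2 + 2*c*Y w*(U w \<bullet> mom1 M (P t)) + U w \<bullet> (mom2 M (P t) *v U w))"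
   and "integrable M (\<lambda>w. c*Y w + P t w \<bullet> U w)"
   and "integral\<^sup>L M (\<lambda>w. c*Y w + P t w \<bullet> U w) = integral\<^sup>L M (\<lambda>w. c*Y w + U w \<bullet> mom1 M (P t))"
   and "integrable M (\<lambda>w. c*Y w + U w \<bullet> mom1 M (P t))"
proof -
  define m where "m = mom1 M (P t)"
  define Mt where "Mt = mom2 M (P t)"
  have tle: "t \<le> T" using t by simp
  have YM: "Y \<in> borel_measurable M" using meas_up[OF tle Ym] .
  have UM: "U \<in> borel_measurable M" using meas_up[OF tle Um] .
  have PM: "P t \<in> borel_measurable M" using Pmeas[OF t] .
  have iP2: "integrable M (\<lambda>w. (P t w $ i)^2)" for i using L2_comp[OF PM PL2[OF t]] .
  have iU2: "integrable M (\<lambda>w. (U w $ i)^2)" for i using L2_comp[OF UM U2] .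
  have PiM: "(\<lambda>w. P t w $ i) \<in> borel_measurable M" for i using meas_nth[OF PM] .
  have UiM: "(\<lambda>w. U w $ i) \<in> borel_measurable M" for i using meas_nth[OF UM] .
  have iP: "integrable M (\<lambda>w. P t w $ i)" for i using L2_L1[OF PiM iP2] .
  have iU: "integrable M (\<lambda>w. U w $ i)" for i using L2_L1[OF UiM iU2] .
  have iY: "integrable M Y" using L2_L1[OF YM Y2] .
  have iPP: "integrable M (\<lambda>w. P t w $ i * P t w $ j)" for i j
    using L2prod[OF PiM PiM iP2 iP2] .
  define h1 where "h1 i w = Y w * U w $ i" for i w
  define h2 where "h2 i j w = U w $ i * U w $ j" for i j w
  have UiF: "(\<lambda>w. U w $ i) \<in> borel_measurable (F t)" for i using meas_nth[OF Um] .
  have h1m: "h1 i \<in> borel_measurable (F t)" for i unfolding h1_def using Ym UiF[of i] by (rule borel_measurable_times)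
  have h2m: "h2 i j \<in> borel_measurable (F t)" for i j unfolding h2_def using UiF[of i] UiF[of j] by (rule borel_measurable_times)
  have ih1: "integrable M (h1 i)" for i unfolding h1_def using L2prod[OF YM UiM Y2 iU2] .
  have ih2: "integrable M (h2 i j)" for i j unfolding h2_def using L2prod[OF UiM UiM iU2 iU2] .
  have g1: "(\<lambda>p::real^'n. p $ i) \<in> borel_measurable borel" for i by (rule borel_measurable_nth)
  have g2: "(\<lambda>p::real^'n. p $ i * p $ j) \<in> borel_measurable borel" for i j
    using borel_measurable_nth borel_measurable_nth by (rule borel_measurable_times)
  have E1: "integrable M (\<lambda>w. h1 i w * P t w $ i)"
     "integral\<^sup>L M (\<lambda>w. h1 i w * P t w $ i) = integral\<^sup>L M (h1 i) * m $ i" for i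
    using IND[OF t h1m g1] ih1 iP by (auto simp: m_def mom1_def)
  have E2: "integrable M (\<lambda>w. h2 i j w * (P t w $ i * P t w $ j))"
     "integral\<^sup>L M (\<lambda>w. h2 i j w * (P t w $ i * P t w $ j)) = integral\<^sup>L M (h2 i j) * Mt $ i $ j" for i j
    using IND[OF t h2m g2] ih2 iPP by (auto simp: Mt_def mom2_def)
  have E0: "integrable M (\<lambda>w. U w $ i * P t w $ i)"
     "integral\<^sup>L M (\<lambda>w. U w $ i * P t w $ i) = integral\<^sup>L M (\<lambda>w. U w $ i) * m $ i" for i
    using IND[OF t UiF g1] iU iP by (auto simp: m_def mom1_def)
  have inS: "P t w \<bullet> U w = (\<Sum>i\<in>UNIV. U w $ i * P t w $ i)" for w
    by (simp add: inner_vec_def mult.commute)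
  have inM: "U w \<bullet> m = (\<Sum>i\<in>UNIV. U w $ i * m $ i)" for w
    by (simp add: inner_vec_def)
  have inQ: "U w \<bullet> (Mt *v U w) = (\<Sum>i\<in>UNIV. \<Sum>j\<in>UNIV. h2 i j w * Mt $ i $ j)" for w
    by (simp add: inner_vec_def matrix_vector_mult_def h2_def sum_distrib_left mult_ac)
  have eqL: "(c*Y w + P t w \<bullet> U w)^2 = c^2*(Y w)^2 + (\<Sum>i\<in>UNIV. 2*c*(h1 i w * P t w $ i))
      + (\<Sum>i\<in>UNIV. \<Sum>j\<in>UNIV. h2 i j w * (P t w $ i * P t w $ j))" for w
  proof -
    have a: "(\<Sum>i\<in>UNIV. U w $ i * P t w $ i) * (\<Sum>j\<in>UNIV. U w $ j * P t w $ j)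
       = (\<Sum>i\<in>UNIV. \<Sum>j\<in>UNIV. h2 i j w * (P t w $ i * P t w $ j))"
      by (simp add: sum_product h2_def mult_ac)
    have b: "2*(c*Y w)*(\<Sum>i\<in>UNIV. U w $ i * P t w $ i) = (\<Sum>i\<in>UNIV. 2*c*(h1 i w * P t w $ i))"
      by (simp add: sum_distrib_left h1_def mult_ac)
    show ?thesis unfolding inS power2_sum using a b by (simp add: power2_eq_square power_mult_distrib)
  qed
  have eqR: "c^2*(Y w)^2 + 2*c*Y w*(U w \<bullet> m) + U w \<bullet> (Mt *v U w) = c^2*(Y w)^2 + (\<Sum>i\<in>UNIV. 2*c*(h1 i w * m $ i))
      + (\<Sum>i\<in>UNIV. \<Sum>j\<in>UNIV. h2 i j w * Mt $ i $ j)" for w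
    unfolding inM inQ by (simp add: sum_distrib_left h1_def mult_ac)
  show "integrable M (\<lambda>w. (c*Y w + P t w \<bullet> U w)^2)"
    unfolding eqL using Y2 E1 E2 by (intro Bochner_Integration.integrable_add Bochner_Integration.integrable_sum Bochner_Integration.integrable_mult_right) auto
  show "integrable M (\<lambda>w. c^2*(Y w)^2 + 2*c*Y w*(U w \<bullet> mom1 M (P t)) + U w \<bullet> (mom2 M (P t) *v U w))"
    unfolding m_def[symmetric] Mt_def[symmetric] eqR using Y2 ih1 ih2
    by (intro Bochner_Integration.integrable_add Bochner_Integration.integrable_sum Bochner_Integration.integrable_mult_right Bochner_Integration.integrable_mult_left) auto
  show "integral\<^sup>L M (\<lambda>w. (c*Y w + P t w \<bullet> U w)^2) = integral\<^sup>L M (\<lambda>w. c^2*(Y w)^2 + 2*c*Y w*(U w \<bullet> mom1 M (P t)) + U w \<bullet> (mom2 M (P t) *v U w))"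
    unfolding m_def[symmetric] Mt_def[symmetric] eqR eqL
    using Y2 ih1 ih2 E1 E2
    by (simp add: Bochner_Integration.integrable_sum Bochner_Integration.integral_sum Bochner_Integration.integral_add integral_mult_right_zero integral_mult_left_zero)
  show "integrable M (\<lambda>w. c*Y w + P t w \<bullet> U w)"
    unfolding inS using iY E0 by (intro Bochner_Integration.integrable_add Bochner_Integration.integrable_sum Bochner_Integration.integrable_mult_right) auto
  show "integrable M (\<lambda>w. c*Y w + U w \<bullet> mom1 M (P t))"
    unfolding m_def[symmetric] inM using iY iU by (intro Bochner_Integration.integrable_add Bochner_Integration.integrable_sum Bochner_Integration.integrable_mult_right Bochner_Integration.integrable_mult_left) auto
  show "integral\<^sup>L M (\<lambda>w. c*Y w + P t w \<bullet> U w) = integral\<^sup>L M (\<lambda>w. c*Y w + U w \<bullet> mom1 M (P t))"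
    unfolding m_def[symmetric] inM inS using iY iU E0
    by (simp add: Bochner_Integration.integrable_sum Bochner_Integration.integral_sum Bochner_Integration.integral_add integral_mult_right_zero integral_mult_left_zero)
qed

end



lemma sym_inner:
  fixes A :: "real^'n^'n"
  assumes sym: "\<And>i j. A$i$j = A$j$i"
  shows "x \<bullet> (A *v y) = y \<bullet> (A *v x)"
proof -
  have "x \<bullet> (A *v y) = (\<Sum>i\<in>UNIV. \<Sum>j\<in>UNIV. x$i * A$i$j * y$j)"
    by (simp add: inner_vec_def matrix_vector_mult_def sum_distrib_left mult_ac)
  also have "\<dots> = (\<Sum>j\<in>UNIV. \<Sum>i\<in>UNIV. x$i * A$i$j * y$j)" by (rule sum.swap)
  also have "\<dots> = y \<bullet> (A *v x)"
    by (simp add: inner_vec_def matrix_vector_mult_def sum_distrib_left mult_ac sym)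
  finally show ?thesis .
qed

lemma quad_facts:
  fixes A :: "real^'n^'n" and m :: "real^'n"
  assumes sym: "\<And>i j. A$i$j = A$j$i" and pd: "\<And>x. x \<noteq> 0 \<Longrightarrow> x \<bullet> (A *v x) > 0"
  shows "A *v (matrix_inv A *v m) = m"
    and "v \<bullet> (A *v v) + 2*a*(v \<bullet> m) + a^2*(m \<bullet> (matrix_inv A *v m))
          = (v + a *\<^sub>R (matrix_inv A *v m)) \<bullet> (A *v (v + a *\<^sub>R (matrix_inv A *v m)))"
    and "0 \<le> x \<bullet> (A *v x)"
proof -
  show nn: "0 \<le> x \<bullet> (A *v x)" for x using pd[of x] by (cases "x = 0") auto
  have "\<forall>x. A *v x = 0 \<longrightarrow> x = 0" using pd by force
  then obtain B where "B ** A = mat 1" using matrix_left_invertible_ker by blast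
  then have "A ** B = mat 1 \<and> B ** A = mat 1" using matrix_left_right_inverse by blast
  then have "A ** matrix_inv A = mat 1 \<and> matrix_inv A ** A = mat 1"
    unfolding matrix_inv_def by (rule someI)
  then show AK: "A *v (matrix_inv A *v m) = m" by (simp add: matrix_vector_mul_assoc)
  define K where "K = matrix_inv A *v m"
  have "(v + a *\<^sub>R K) \<bullet> (A *v (v + a *\<^sub>R K)) =
      v \<bullet> (A *v v) + a * (v \<bullet> (A *v K)) + a * (K \<bullet> (A *v v)) + a^2 * (K \<bullet> (A *v K))"
    by (simp add: matrix_vector_right_distrib matrix_vector_mult_scaleR inner_add_left inner_add_right
        power2_eq_square algebra_simps)
  also have "K \<bullet> (A *v v) = v \<bullet> (A *v K)" using sym_inner[OF sym] by blast
  also have "A *v K = m" using AK K_def by simp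
  finally show "v \<bullet> (A *v v) + 2*a*(v \<bullet> m) + a^2*(m \<bullet> (matrix_inv A *v m))
          = (v + a *\<^sub>R (matrix_inv A *v m)) \<bullet> (A *v (v + a *\<^sub>R (matrix_inv A *v m)))"
    unfolding K_def[symmetric] by (simp add: inner_commute)
qed

lemma mom2_sym: "mom2 M X $ i $ j = mom2 M X $ j $ i"
  by (simp add: mom2_def mult.commute)




locale mvfull = mvsetup +
  fixes s :: "nat \<Rightarrow> real"
  assumes s1: "\<And>t. t<T \<Longrightarrow> s t > 1"
  and pd: "\<And>t x. t<T \<Longrightarrow> x \<noteq> 0 \<Longrightarrow> x \<bullet> (mom2 M (P t) *v x) > 0"
  and Bb: "\<And>t. t<T \<Longrightarrow> 0 < Bval M (P t) \<and> Bval M (P t) < 1"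
begin

lemma qf: assumes "t<T"
  shows "v \<bullet> (mom2 M (P t) *v v) + 2*a*(v \<bullet> mom1 M (P t)) + a^2*Bval M (P t)
    = (v + a *\<^sub>R Kvec M (P t)) \<bullet> (mom2 M (P t) *v (v + a *\<^sub>R Kvec M (P t)))"
  unfolding Bval_def Kvec_def using quad_facts(2)[OF mom2_sym pd[OF assms]] by blast

lemma qnn: assumes "t<T" shows "0 \<le> x \<bullet> (mom2 M (P t) *v x)"
  using quad_facts(3)[OF mom2_sym pd[OF assms]] by blast

lemma Km: assumes "t<T" shows "Kvec M (P t) \<bullet> mom1 M (P t) = Bval M (P t)"
  unfolding Bval_def by (simp add: inner_commute)

lemma step_lb:
  fixes Y :: "'a \<Rightarrow> real" and c :: real
  assumes t: "t<T" and Ym: "Y \<in> borel_measurable (F t)" and Um: "U \<in> borel_measurable (F t)"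
    and Y2: "integrable M (\<lambda>w. (Y w)^2)" and U2: "integrable M (\<lambda>w. (norm (U w))^2)"
  shows "c^2*(1 - Bval M (P t)) * integral\<^sup>L M (\<lambda>w. (Y w)^2) \<le> integral\<^sup>L M (\<lambda>w. (c*Y w + P t w \<bullet> U w)^2)"
proof -
  note K = KEY[OF t Ym Um Y2 U2, of c]
  have "integral\<^sup>L M (\<lambda>w. c^2*(1 - Bval M (P t)) * (Y w)^2) \<le>
     integral\<^sup>L M (\<lambda>w. c^2*(Y w)^2 + 2*c*Y w*(U w \<bullet> mom1 M (P t)) + U w \<bullet> (mom2 M (P t) *v U w))"
  proof (rule integral_mono)
    show "integrable M (\<lambda>w. c^2*(1 - Bval M (P t)) * (Y w)^2)" using Y2 by simp
    show "integrable M (\<lambda>w. c^2*(Y w)^2 + 2*c*Y w*(U w \<bullet> mom1 M (P t)) + U w \<bullet> (mom2 M (P t) *v U w))"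
      using K(3) .
    fix w
    have e: "U w \<bullet> (mom2 M (P t) *v U w) + 2*(c*Y w)*(U w \<bullet> mom1 M (P t)) + (c*Y w)^2*Bval M (P t)
      = (U w + (c*Y w) *\<^sub>R Kvec M (P t)) \<bullet> (mom2 M (P t) *v (U w + (c*Y w) *\<^sub>R Kvec M (P t)))"
      by (rule qf[OF t])
    have "0 \<le> (U w + (c*Y w) *\<^sub>R Kvec M (P t)) \<bullet> (mom2 M (P t) *v (U w + (c*Y w) *\<^sub>R Kvec M (P t)))"
      by (rule qnn[OF t])
    then show "c^2*(1 - Bval M (P t)) * (Y w)^2 \<le> c^2*(Y w)^2 + 2*c*Y w*(U w \<bullet> mom1 M (P t)) + U w \<bullet> (mom2 M (P t) *v U w)"
      using e by (simp add: power_mult_distrib algebra_simps)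
  qed
  then show ?thesis using K(2) by simp
qed

lemma step_eq:
  fixes Y :: "'a \<Rightarrow> real" and c :: real
  assumes t: "t<T" and Ym: "Y \<in> borel_measurable (F t)" and Y2: "integrable M (\<lambda>w. (Y w)^2)"
  shows "integrable M (\<lambda>w. (c*Y w + P t w \<bullet> ((-(c*Y w)) *\<^sub>R Kvec M (P t)))^2)"
    "integral\<^sup>L M (\<lambda>w. (c*Y w + P t w \<bullet> ((-(c*Y w)) *\<^sub>R Kvec M (P t)))^2)
       = c^2*(1 - Bval M (P t)) * integral\<^sup>L M (\<lambda>w. (Y w)^2)"
    "integrable M (\<lambda>w. c*Y w + P t w \<bullet> ((-(c*Y w)) *\<^sub>R Kvec M (P t)))"
    "integral\<^sup>L M (\<lambda>w. c*Y w + P t w \<bullet> ((-(c*Y w)) *\<^sub>R Kvec M (P t)))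
       = c*(1 - Bval M (P t)) * integral\<^sup>L M Y"
proof -
  define K where "K = Kvec M (P t)"
  have Um: "(\<lambda>w. (-(c*Y w)) *\<^sub>R K) \<in> borel_measurable (F t)" using Ym by measurable
  have U2: "integrable M (\<lambda>w. (norm ((-(c*Y w)) *\<^sub>R K))^2)"
  proof -
    have "(\<lambda>w. (norm ((-(c*Y w)) *\<^sub>R K))^2) = (\<lambda>w. (c^2 * (norm K)^2) * (Y w)^2)"
      by (simp add: power_mult_distrib mult_ac)
    then show ?thesis using Y2 by simp
  qed
  have YM: "Y \<in> borel_measurable M" using meas_up[OF _ Ym] t by simp
  have iY: "integrable M Y" using L2_L1[OF YM Y2] .
  note KK = KEY[OF t Ym Um Y2 U2, of c, unfolded K_def]
  have q: "c^2*(Y w)^2 + 2*c*Y w*((-(c*Y w)) *\<^sub>R Kvec M (P t) \<bullet> mom1 M (P t))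
      + (-(c*Y w)) *\<^sub>R Kvec M (P t) \<bullet> (mom2 M (P t) *v ((-(c*Y w)) *\<^sub>R Kvec M (P t)))
     = c^2*(1 - Bval M (P t)) * (Y w)^2" for w
  proof -
    have "((-(c*Y w)) *\<^sub>R Kvec M (P t)) \<bullet> (mom2 M (P t) *v ((-(c*Y w)) *\<^sub>R Kvec M (P t))) + 2*(c*Y w)*(((-(c*Y w)) *\<^sub>R Kvec M (P t)) \<bullet> mom1 M (P t)) + (c*Y w)^2*Bval M (P t)
      = ((-(c*Y w)) *\<^sub>R Kvec M (P t) + (c*Y w) *\<^sub>R Kvec M (P t)) \<bullet> (mom2 M (P t) *v ((-(c*Y w)) *\<^sub>R Kvec M (P t) + (c*Y w) *\<^sub>R Kvec M (P t)))"
      by (rule qf[OF t])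
    also have "\<dots> = 0" by simp
    finally show ?thesis by (simp add: power_mult_distrib algebra_simps)
  qed
  have mq: "c*Y w + (-(c*Y w)) *\<^sub>R Kvec M (P t) \<bullet> mom1 M (P t) = c*(1 - Bval M (P t)) * Y w" for w
    using Km[OF t] by (simp add: algebra_simps)
  show "integrable M (\<lambda>w. (c*Y w + P t w \<bullet> ((-(c*Y w)) *\<^sub>R Kvec M (P t)))^2)" using KK(1) .
  show "integrable M (\<lambda>w. c*Y w + P t w \<bullet> ((-(c*Y w)) *\<^sub>R Kvec M (P t)))" using KK(4) .
  show "integral\<^sup>L M (\<lambda>w. (c*Y w + P t w \<bullet> ((-(c*Y w)) *\<^sub>R Kvec M (P t)))^2)
       = c^2*(1 - Bval M (P t)) * integral\<^sup>L M (\<lambda>w. (Y w)^2)"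
    using KK(2) unfolding q by simp
  show "integral\<^sup>L M (\<lambda>w. c*Y w + P t w \<bullet> ((-(c*Y w)) *\<^sub>R Kvec M (P t)))
       = c*(1 - Bval M (P t)) * integral\<^sup>L M Y"
    using KK(5) unfolding mq by simp
qed

end



lemma fb_eq: "wealth s P (\<lambda>t w. g t (fb_wealth s P g x0 t w)) x0 t = fb_wealth s P g x0 t"
  by (induction t) auto

context mvfull begin

lemma wealth_Suc_fun: "wealth s P u x0 (Suc t) = (\<lambda>w. s t * wealth s P u x0 t w + P t w \<bullet> u t w)"
  by (rule ext) simp

lemma wealth_ok:
  assumes "t \<le> T" "\<And>t'. t' < t \<Longrightarrow> u t' \<in> borel_measurable (F t') \<and> integrable M (\<lambda>w. (norm (u t' w))^2)"
  shows "wealth s P u x0 t \<in> borel_measurable (F t) \<and> integrable M (\<lambda>w. (wealth s P u x0 t w)^2)"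
  using assms
proof (induction t)
  case 0
  have "wealth s P u x0 0 = (\<lambda>w. x0)" by (rule ext) simp
  then show ?case by simp
next
  case (Suc t)
  then have t: "t < T" by simp
  have IH: "wealth s P u x0 t \<in> borel_measurable (F t) \<and> integrable M (\<lambda>w. (wealth s P u x0 t w)^2)"
    using Suc by simp
  have u: "u t \<in> borel_measurable (F t)" "integrable M (\<lambda>w. (norm (u t w))^2)" using Suc.prems(2)[of t] by auto
  have m1: "wealth s P u x0 t \<in> borel_measurable (F (Suc t))" using meas_mono[of t "Suc t" "wealth s P u x0 t"] IH by simp
  have m2: "u t \<in> borel_measurable (F (Suc t))" using meas_mono[of t "Suc t" "u t"] u by simp
  have m3: "P t \<in> borel_measurable (F (Suc t))" using F_Pmeas[of t "Suc t"] by simp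
  have "(\<lambda>w. s t * wealth s P u x0 t w + P t w \<bullet> u t w) \<in> borel_measurable (F (Suc t))"
    using m1 m2 m3 by measurable
  moreover have "integrable M (\<lambda>w. (s t * wealth s P u x0 t w + P t w \<bullet> u t w)^2)"
    using KEY(1)[OF t _ u(1) _ u(2)] IH by blast
  ultimately show ?case unfolding wealth_Suc_fun by simp
qed

lemma shift_ok:
  fixes X :: "'a \<Rightarrow> real" and a :: real
  assumes "t \<le> T" "X \<in> borel_measurable (F t)" "integrable M (\<lambda>w. (X w)^2)"
  shows "(\<lambda>w. X w - a) \<in> borel_measurable (F t)" "integrable M (\<lambda>w. (X w - a)^2)" "integrable M X"
proof -
  show "(\<lambda>w. X w - a) \<in> borel_measurable (F t)" using assms(2) by measurable
  have XM: "X \<in> borel_measurable M" using meas_up assms by blast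
  show iX: "integrable M X" using L2_L1[OF XM assms(3)] .
  have "(\<lambda>w. (X w - a)^2) = (\<lambda>w. (X w)^2 + (-2*a) * X w + a^2)"
    by (rule ext) (simp add: power2_diff)
  then show "integrable M (\<lambda>w. (X w - a)^2)" using iX assms(3) by simp
qed

definition ccg :: "real \<Rightarrow> nat \<Rightarrow> real" where
  "ccg \<gamma> t = \<gamma> * (\<Prod>k\<in>{t..<T}. inverse (s k))"

lemma ccg_step: assumes "t < T" shows "s t * ccg \<gamma> t = ccg \<gamma> (Suc t)"
proof -
  have "s t \<noteq> 0" using s1[OF assms] by simp
  moreover have "(\<Prod>k\<in>{t..<T}. inverse (s k)) = inverse (s t) * (\<Prod>k\<in>{Suc t..<T}. inverse (s k))"
    using assms by (simp add: prod.atLeast_Suc_lessThan)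
  ultimately show ?thesis unfolding ccg_def by (simp add: field_simps)
qed

lemma ccg_T: "ccg \<gamma> T = \<gamma>" unfolding ccg_def by simp

lemma lower_bound:
  assumes "t \<le> T" and adm: "admissible M P T u"
  shows "(\<Prod>k<t. (s k)^2 * (1 - Bval M (P k))) * (x0 - ccg \<gamma> 0)^2
     \<le> integral\<^sup>L M (\<lambda>w. (wealth s P u x0 t w - ccg \<gamma> t)^2)"
  using assms(1)
proof (induction t)
  case 0 then show ?case by (simp add: prob_space)
next
  case (Suc t)
  then have t: "t < T" by simp
  have uok: "\<And>t'. t' < t \<Longrightarrow> u t' \<in> borel_measurable (F t') \<and> integrable M (\<lambda>w. (norm (u t' w))^2)"
    using adm t unfolding admissible_def by auto
  have W: "wealth s P u x0 t \<in> borel_measurable (F t) \<and> integrable M (\<lambda>w. (wealth s P u x0 t w)^2)"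
    using wealth_ok[OF _ uok] t by simp
  have tle: "t \<le> T" using t by simp
  note Y1 = shift_ok(1)[OF tle conjunct1[OF W] conjunct2[OF W], where a="ccg \<gamma> t"]
  note Y2 = shift_ok(2)[OF tle conjunct1[OF W] conjunct2[OF W], where a="ccg \<gamma> t"]
  have u: "u t \<in> borel_measurable (F t)" "integrable M (\<lambda>w. (norm (u t w))^2)"
    using adm t unfolding admissible_def by auto
  have eq: "wealth s P u x0 (Suc t) w - ccg \<gamma> (Suc t) = s t * (wealth s P u x0 t w - ccg \<gamma> t) + P t w \<bullet> u t w" for w
    using ccg_step[OF t, of \<gamma>] by (simp add: algebra_simps)
  have "(s t)^2 * (1 - Bval M (P t)) * integral\<^sup>L M (\<lambda>w. (wealth s P u x0 t w - ccg \<gamma> t)^2)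
     \<le> integral\<^sup>L M (\<lambda>w. (wealth s P u x0 (Suc t) w - ccg \<gamma> (Suc t))^2)"
    unfolding eq using step_lb[OF t Y1 u(1) Y2 u(2)] t by simp
  moreover have "(s t)^2 * (1 - Bval M (P t)) * ((\<Prod>k<t. (s k)^2 * (1 - Bval M (P k))) * (x0 - ccg \<gamma> 0)^2)
     \<le> (s t)^2 * (1 - Bval M (P t)) * integral\<^sup>L M (\<lambda>w. (wealth s P u x0 t w - ccg \<gamma> t)^2)"
    using Suc.IH t Bb[OF t] by (intro mult_left_mono) auto
  ultimately show ?case by (simp add: mult_ac)
qed

end



context mvfull begin

definition Gc :: "real \<Rightarrow> real \<Rightarrow> real" where
  "Gc x0 wT = x0 * (\<Prod>k<T. s k) + 1 / (2 * wT * (\<Prod>k<T. 1 - Bval M (P k)))"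

lemma fb_form: assumes t: "t<T"
  shows "mv_feedback M P s T x0 wT t x = (-(s t * (x - ccg (Gc x0 wT) t))) *\<^sub>R Kvec M (P t)"
proof -
  have "s t * ccg (Gc x0 wT) t = Gc x0 wT * (\<Prod>k\<in>{t+1..<T}. inverse (s k))"
    using ccg_step[OF t] unfolding ccg_def by simp
  then show ?thesis unfolding mv_feedback_def Gc_def[symmetric]
    by (simp add: scaleR_left_distrib[symmetric] algebra_simps)
qed

definition us where "us x0 wT = (\<lambda>t w. mv_feedback M P s T x0 wT t (fb_wealth s P (mv_feedback M P s T x0 wT) x0 t w))"

lemma us_eq: assumes "t < T"
  shows "us x0 wT t w = (-(s t * (wealth s P (us x0 wT) x0 t w - ccg (Gc x0 wT) t))) *\<^sub>R Kvec M (P t)"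
proof -
  have "wealth s P (us x0 wT) x0 t w = fb_wealth s P (mv_feedback M P s T x0 wT) x0 t w"
    unfolding us_def fb_eq ..
  then show ?thesis unfolding us_def using fb_form[OF assms] by simp
qed

lemma us_ok:
  assumes "t \<le> T"
  shows "\<forall>t'<t. us x0 wT t' \<in> borel_measurable (F t') \<and> integrable M (\<lambda>w. (norm (us x0 wT t' w))^2)"
  using assms
proof (induction t)
  case 0 then show ?case by simp
next
  case (Suc t)
  then have t: "t < T" and tle: "t \<le> T" by simp_all
  have IH: "\<forall>t'<t. us x0 wT t' \<in> borel_measurable (F t') \<and> integrable M (\<lambda>w. (norm (us x0 wT t' w))^2)"
    using Suc by simp
  have W: "wealth s P (us x0 wT) x0 t \<in> borel_measurable (F t) \<and> integrable M (\<lambda>w. (wealth s P (us x0 wT) x0 t w)^2)"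
    by (rule wealth_ok[OF tle]) (use IH in blast)
  note Y1 = shift_ok(1)[OF tle conjunct1[OF W] conjunct2[OF W], where a="ccg (Gc x0 wT) t"]
  note Y2 = shift_ok(2)[OF tle conjunct1[OF W] conjunct2[OF W], where a="ccg (Gc x0 wT) t"]
  have ue: "us x0 wT t = (\<lambda>w. (-(s t * (wealth s P (us x0 wT) x0 t w - ccg (Gc x0 wT) t))) *\<^sub>R Kvec M (P t))"
    by (rule ext) (rule us_eq[OF t])
  have m: "us x0 wT t \<in> borel_measurable (F t)" unfolding ue
    by (intro borel_measurable_scaleR borel_measurable_const borel_measurable_uminus borel_measurable_times Y1)
  have "(\<lambda>w. (norm (us x0 wT t w))^2) = (\<lambda>w. ((s t)^2 * (norm (Kvec M (P t)))^2) * (wealth s P (us x0 wT) x0 t w - ccg (Gc x0 wT) t)^2)"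
    unfolding ue by (simp add: power_mult_distrib mult_ac)
  then have i: "integrable M (\<lambda>w. (norm (us x0 wT t w))^2)" using Y2 by simp
  show ?case
  proof (intro allI impI)
    fix t' assume "t' < Suc t"
    then show "us x0 wT t' \<in> borel_measurable (F t') \<and> integrable M (\<lambda>w. (norm (us x0 wT t' w))^2)"
      using m i IH by (cases "t' = t") auto
  qed
qed

lemma us_moments:
  assumes "t \<le> T"
  shows "integral\<^sup>L M (\<lambda>w. wealth s P (us x0 wT) x0 t w - ccg (Gc x0 wT) t)
           = (\<Prod>k<t. s k * (1 - Bval M (P k))) * (x0 - ccg (Gc x0 wT) 0)
       \<and> integral\<^sup>L M (\<lambda>w. (wealth s P (us x0 wT) x0 t w - ccg (Gc x0 wT) t)^2)
           = (\<Prod>k<t. (s k)^2 * (1 - Bval M (P k))) * (x0 - ccg (Gc x0 wT) 0)^2"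
  using assms
proof (induction t)
  case 0 then show ?case by (simp add: prob_space)
next
  case (Suc t)
  then have t: "t < T" and tle: "t \<le> T" by simp_all
  have W: "wealth s P (us x0 wT) x0 t \<in> borel_measurable (F t) \<and> integrable M (\<lambda>w. (wealth s P (us x0 wT) x0 t w)^2)"
    by (rule wealth_ok[OF tle]) (use us_ok[OF tle] in blast)
  note Y1 = shift_ok(1)[OF tle conjunct1[OF W] conjunct2[OF W], where a="ccg (Gc x0 wT) t"]
  note Y2 = shift_ok(2)[OF tle conjunct1[OF W] conjunct2[OF W], where a="ccg (Gc x0 wT) t"]
  define y where "y w = wealth s P (us x0 wT) x0 t w - ccg (Gc x0 wT) t" for w
  have eq: "wealth s P (us x0 wT) x0 (Suc t) w - ccg (Gc x0 wT) (Suc t)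
     = s t * y w + P t w \<bullet> ((-(s t * y w)) *\<^sub>R Kvec M (P t))" for w
  proof -
    have "wealth s P (us x0 wT) x0 (Suc t) w = s t * wealth s P (us x0 wT) x0 t w + P t w \<bullet> us x0 wT t w"
      by (simp only: wealth.simps)
    also have "us x0 wT t w = (-(s t * y w)) *\<^sub>R Kvec M (P t)" unfolding y_def by (rule us_eq[OF t])
    finally show ?thesis using ccg_step[OF t, of "Gc x0 wT"] unfolding y_def by (simp add: algebra_simps)
  qed
  have y1: "y \<in> borel_measurable (F t)" unfolding y_def using Y1 .
  have y2: "integrable M (\<lambda>w. (y w)^2)" unfolding y_def using Y2 .
  note SE = step_eq[OF t y1 y2, of "s t"]
  have IH1: "integral\<^sup>L M y = (\<Prod>k<t. s k * (1 - Bval M (P k))) * (x0 - ccg (Gc x0 wT) 0)"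
    and IH2: "integral\<^sup>L M (\<lambda>w. (y w)^2) = (\<Prod>k<t. (s k)^2 * (1 - Bval M (P k))) * (x0 - ccg (Gc x0 wT) 0)^2"
    using Suc.IH tle unfolding y_def by auto
  show ?case unfolding eq SE(2) SE(4) IH1 IH2 by (simp add: mult_ac)
qed

end



lemma t1: fixes a e z :: real assumes nz: "1 - z \<noteq> 0"
  shows "z*(a-(e - z*a)/(1-z))^2 + 2*((e - z*a)/(1-z))*e - ((e - z*a)/(1-z))^2 - e^2 = z*(e-a)^2/(1-z)"
proof -
  define g where "g = (e - z*a)/(1-z)"
  have eg: "e = g*(1-z) + z*a" unfolding g_def using nz by (simp add: field_simps)
  have "(z*(a-g)^2 + 2*g*e - g^2 - e^2) * (1-z) = z*(e-a)^2"
    unfolding eg by algebra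
  then show ?thesis unfolding g_def[symmetric] using nz by (simp add: field_simps)
qed

lemma t2: fixes a e z w :: real assumes nz: "1 - z \<noteq> 0" "z \<noteq> 0" "w \<noteq> 0"
  shows "a + (1-z)/(4*w*z) - (e - w*(z*(e-a)^2/(1-z))) = (2*w*z*(e-a) - (1-z))^2/(4*w*z*(1-z))"
  using nz by (simp add: field_simps power2_eq_square)

lemma mv_alg:
  fixes e X2 a z w :: real
  assumes z0: "0 < z" and z1: "z < 1" and w: "0 < w"
    and hyp: "\<And>\<gamma>. z*(a-\<gamma>)^2 \<le> X2 - 2*\<gamma>*e + \<gamma>^2"
  shows "e - w*(X2 - e^2) \<le> a + (1-z)/(4*w*z)"
proof -
  have nz: "1 - z \<noteq> 0" using z1 by simp
  have "X2 - e^2 \<ge> z*(e-a)^2/(1-z)" using hyp[of "(e - z*a)/(1-z)"] t1[OF nz, of a e] by linarith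
  then have "w*(z*(e-a)^2/(1-z)) \<le> w*(X2 - e^2)" using w by (intro mult_left_mono) auto
  moreover have "0 \<le> (2*w*z*(e-a) - (1-z))^2/(4*w*z*(1-z))"
    using z0 z1 w by (intro divide_nonneg_pos) auto
  moreover have "a + (1-z)/(4*w*z) - (e - w*(z*(e-a)^2/(1-z))) = (2*w*z*(e-a) - (1-z))^2/(4*w*z*(1-z))"
    using z0 w by (intro t2[OF nz]) auto
  ultimately show ?thesis by linarith
qed




context mvfull begin

lemma Spos: "t \<le> T \<Longrightarrow> 0 < (\<Prod>k<t. s k)"
  using s1 by (intro prod_pos) (smt (verit) lessThan_iff order_less_le_trans)

lemma Ppos: "t \<le> T \<Longrightarrow> 0 < (\<Prod>k<t. 1 - Bval M (P k))"
  using Bb by (intro prod_pos) (smt (verit) lessThan_iff order_less_le_trans)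

lemma Plt1: assumes "1 \<le> T" shows "(\<Prod>k<T. 1 - Bval M (P k)) < 1"
proof -
  obtain n where n: "T = Suc n" using assms by (cases T) auto
  have "(\<Prod>k<n. 1 - Bval M (P k)) \<le> 1" using Bb n by (intro prod_le_1) (smt (verit) lessThan_iff less_Suc_eq)
  moreover have "0 \<le> (\<Prod>k<n. 1 - Bval M (P k))" using Ppos[of n] n by simp
  moreover have "0 < 1 - Bval M (P n)" "1 - Bval M (P n) < 1" using Bb[of n] n by auto
  ultimately have "(\<Prod>k<n. 1 - Bval M (P k)) * (1 - Bval M (P n)) < 1"
    by (smt (verit) mult_left_le_one_le)
  then show ?thesis unfolding n by simp
qed

lemma R_eq: assumes "t \<le> T"
  shows "(\<Prod>k\<in>{t..<T}. inverse (s k)) = (\<Prod>k<t. s k) / (\<Prod>k<T. s k)"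
proof -
  have a: "(\<Prod>k\<in>{t..<T}. inverse (s k)) = inverse (\<Prod>k\<in>{t..<T}. s k)"
    using prod_inversef[of s "{t..<T}"] by (simp add: o_def)
  have b: "(\<Prod>k<t. s k) * (\<Prod>k\<in>{t..<T}. s k) = (\<Prod>k<T. s k)"
    using prod.atLeastLessThan_concat[of 0 t T s] assms by (simp add: lessThan_atLeast0)
  have "0 < (\<Prod>k\<in>{t..<T}. s k)" using s1 by (intro prod_pos) (smt (verit) atLeastLessThan_iff)
  then have c: "(\<Prod>k\<in>{t..<T}. s k) \<noteq> 0" by linarith
  have d: "(\<Prod>k<t. s k) \<noteq> 0" using Spos[OF assms] by linarith
  have e: "\<And>p q::real. p \<noteq> 0 \<Longrightarrow> q \<noteq> 0 \<Longrightarrow> inverse q = p / (p * q)" by (simp add: field_simps)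
  show ?thesis unfolding a b[symmetric] using e[OF d c] .
qed

lemma integral_shift:
  fixes X :: "'a \<Rightarrow> real"
  assumes "integrable M X"
  shows "integral\<^sup>L M (\<lambda>w. X w - c) = integral\<^sup>L M X - c"
  using assms by (simp add: prob_space)

end



lemma alg_E: fixes St Pt S Pi x0 wT :: real assumes "S \<noteq> 0" "Pi \<noteq> 0" "wT \<noteq> 0"
  shows "St*Pt*(x0 - (x0*S + 1/(2*wT*Pi))/S) + (x0*S + 1/(2*wT*Pi))*(St/S) = x0*St + 1/(2*wT)*(St/S)*(1-Pt)/Pi"
  using assms by (simp add: field_simps)

lemma alg_V: fixes S Pi x0 wT :: real assumes "S \<noteq> 0" "Pi \<noteq> 0" "wT \<noteq> 0"
  shows "S^2*Pi*(x0 - (x0*S + 1/(2*wT*Pi))/S)^2 - (S*Pi*(x0 - (x0*S + 1/(2*wT*Pi))/S))^2 = (1-Pi)/(4*wT^2*Pi)"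
proof -
  have a: "S*(x0 - (x0*S + 1/(2*wT*Pi))/S) = -(1/(2*wT*Pi))" using assms by (simp add: field_simps)
  have "S^2*Pi*(x0 - (x0*S + 1/(2*wT*Pi))/S)^2 - (S*Pi*(x0 - (x0*S + 1/(2*wT*Pi))/S))^2
     = Pi*(S*(x0 - (x0*S + 1/(2*wT*Pi))/S))^2 - Pi^2*(S*(x0 - (x0*S + 1/(2*wT*Pi))/S))^2"
    by (simp add: power_mult_distrib mult_ac)
  also have "\<dots> = (1-Pi)/(4*wT^2*Pi)" unfolding a using assms by (simp add: field_simps power2_eq_square)
  finally show ?thesis .
qed

lemma alg_J: fixes S Pi x0 wT :: real assumes "Pi \<noteq> 0" "wT \<noteq> 0"
  shows "x0*S + 1/(2*wT)*1*(1-Pi)/Pi - wT*((1-Pi)/(4*wT^2*Pi)) = S*x0 + (1-Pi)/(4*wT*Pi)"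
  using assms by (simp add: field_simps power2_eq_square)

lemma alg_LB: fixes S Pi x0 g :: real assumes "S \<noteq> 0"
  shows "S^2*Pi*(x0 - g/S)^2 = Pi*(S*x0-g)^2"
proof -
  have "S*(x0 - g/S) = S*x0 - g" using assms by (simp add: field_simps)
  then show ?thesis by (metis mult.assoc mult.commute power_mult_distrib)
qed




context mvfull begin

lemma main:
  assumes T1: "1 \<le> T" and w: "wT > 0"
  shows "admissible M P T (us x0 wT)
    \<and> (\<forall>u. admissible M P T u \<longrightarrow>
          expectation (wealth s P u x0 T) - wT * variance (wealth s P u x0 T)
        \<le> expectation (wealth s P (us x0 wT) x0 T) - wT * variance (wealth s P (us x0 wT) x0 T))
    \<and> (\<forall>t\<le>T. expectation (wealth s P (us x0 wT) x0 t)
          = x0 * (\<Prod>k<t. s k) + 1 / (2 * wT) * (\<Prod>k\<in>{t..<T}. inverse (s k))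
              * (1 - (\<Prod>k<t. 1 - Bval M (P k))) / (\<Prod>k<T. 1 - Bval M (P k)))
    \<and> variance (wealth s P (us x0 wT) x0 T)
          = (1 - (\<Prod>k<T. 1 - Bval M (P k))) / (4 * wT\<^sup>2 * (\<Prod>k<T. 1 - Bval M (P k)))"
proof -
  define S where "S = (\<Prod>k<T. s k)"
  define Pi where "Pi = (\<Prod>k<T. 1 - Bval M (P k))"
  define G where "G = Gc x0 wT"
  have Sp: "S \<noteq> 0" using Spos[of T] unfolding S_def by linarith
  have Pp: "0 < Pi" using Ppos[of T] unfolding Pi_def by simp
  have Pl: "Pi < 1" using Plt1[OF T1] unfolding Pi_def by simp
  have wne: "wT \<noteq> 0" using w by simp
  have G_eq: "G = x0*S + 1/(2*wT*Pi)" unfolding G_def Gc_def S_def Pi_def ..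
  have cc0: "ccg g 0 = g / S" for g unfolding ccg_def using R_eq[of 0] unfolding S_def by simp
  have adm: "admissible M P T (us x0 wT)" using us_ok[of T] unfolding admissible_def by simp
  have Wok: "wealth s P (us x0 wT) x0 t \<in> borel_measurable (F t) \<and> integrable M (\<lambda>w. (wealth s P (us x0 wT) x0 t w)^2)"
    if "t \<le> T" for t
    by (rule wealth_ok[OF that]) (use us_ok[OF that] in blast)
  have EW: "expectation (wealth s P (us x0 wT) x0 t)
          = x0 * (\<Prod>k<t. s k) + 1 / (2 * wT) * (\<Prod>k\<in>{t..<T}. inverse (s k))
              * (1 - (\<Prod>k<t. 1 - Bval M (P k))) / (\<Prod>k<T. 1 - Bval M (P k))" if tle: "t \<le> T" for t
  proof -
    have iW: "integrable M (wealth s P (us x0 wT) x0 t)"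
      using shift_ok(3)[OF tle conjunct1[OF Wok[OF tle]] conjunct2[OF Wok[OF tle]]] .
    have m1: "integral\<^sup>L M (\<lambda>w. wealth s P (us x0 wT) x0 t w - ccg G t) = (\<Prod>k<t. s k * (1 - Bval M (P k))) * (x0 - ccg G 0)"
      using us_moments[OF tle] unfolding G_def by blast
    have "expectation (wealth s P (us x0 wT) x0 t) = (\<Prod>k<t. s k * (1 - Bval M (P k))) * (x0 - ccg G 0) + ccg G t"
      using m1 integral_shift[OF iW, of "ccg G t"] by simp
    also have "\<dots> = (\<Prod>k<t. s k) * (\<Prod>k<t. 1 - Bval M (P k)) * (x0 - G/S) + G * ((\<Prod>k<t. s k)/S)"
      unfolding cc0 prod.distrib using R_eq[OF tle] unfolding ccg_def S_def by simp
    also have "\<dots> = x0 * (\<Prod>k<t. s k) + 1/(2*wT) * ((\<Prod>k<t. s k)/S) * (1 - (\<Prod>k<t. 1 - Bval M (P k))) / Pi"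
      unfolding G_eq by (rule alg_E[OF Sp _ wne]) (use Pp in simp)
    finally show ?thesis using R_eq[OF tle] unfolding S_def Pi_def by simp
  qed
  have VW: "variance (wealth s P (us x0 wT) x0 T) = (1 - Pi) / (4 * wT\<^sup>2 * Pi)"
  proof -
    define y where "y w = wealth s P (us x0 wT) x0 T w - G" for w
    have y1: "integrable M y" unfolding y_def using shift_ok(2)[OF order_refl conjunct1[OF Wok[OF order_refl]] conjunct2[OF Wok[OF order_refl]], of G]
      shift_ok(1)[OF order_refl conjunct1[OF Wok[OF order_refl]] conjunct2[OF Wok[OF order_refl]], of G]
      L2_L1 meas_up[of T] by blast
    have y2: "integrable M (\<lambda>w. (y w)^2)" unfolding y_def
      using shift_ok(2)[OF order_refl conjunct1[OF Wok[OF order_refl]] conjunct2[OF Wok[OF order_refl]], of G] .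
    have iW: "integrable M (wealth s P (us x0 wT) x0 T)"
      using shift_ok(3)[OF order_refl conjunct1[OF Wok[OF order_refl]] conjunct2[OF Wok[OF order_refl]]] .
    have EX: "expectation (wealth s P (us x0 wT) x0 T) = expectation y + G"
      unfolding y_def using integral_shift[OF iW, of G] by simp
    have "variance (wealth s P (us x0 wT) x0 T) = integral\<^sup>L M (\<lambda>w. (y w - expectation y)^2)"
      unfolding EX unfolding y_def by (simp add: algebra_simps)
    also have "\<dots> = expectation (\<lambda>w. (y w)^2) - (expectation y)^2"
      using variance_eq[OF y1 y2] .
    also have "expectation y = S * Pi * (x0 - G/S)"
      using conjunct1[OF us_moments[OF order_refl, of x0 wT]] unfolding y_def G_def[symmetric] ccg_T cc0
      unfolding prod.distrib S_def Pi_def by simp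
    also have "expectation (\<lambda>w. (y w)^2) = S^2 * Pi * (x0 - G/S)^2"
      using conjunct2[OF us_moments[OF order_refl, of x0 wT]] unfolding y_def G_def[symmetric] ccg_T cc0
      unfolding prod.distrib S_def Pi_def prod_power_distrib by simp
    finally show ?thesis unfolding G_eq using alg_V[OF Sp _ wne, of Pi x0] Pp by simp
  qed
  have ET: "expectation (wealth s P (us x0 wT) x0 T) = x0*S + 1/(2*wT)*1*(1-Pi)/Pi"
    using EW[OF order_refl] unfolding S_def Pi_def by simp
  have JU: "expectation (wealth s P (us x0 wT) x0 T) - wT * variance (wealth s P (us x0 wT) x0 T)
      = S*x0 + (1-Pi)/(4*wT*Pi)"
  proof -
    have JU0: "A - wT * B = A' - wT * B'" if "A = A'" "B = B'" for A B A' B' :: real using that by simp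
    show ?thesis using JU0[OF ET VW] alg_J[of Pi wT x0 S] Pp wne by simp
  qed
  have OPT: "expectation (wealth s P u x0 T) - wT * variance (wealth s P u x0 T) \<le> S*x0 + (1-Pi)/(4*wT*Pi)"
    if admu: "admissible M P T u" for u
  proof -
    define X where "X = wealth s P u x0 T"
    have uok: "\<And>t'. t' < T \<Longrightarrow> u t' \<in> borel_measurable (F t') \<and> integrable M (\<lambda>w. (norm (u t' w))^2)"
      using admu unfolding admissible_def by auto
    have XW: "X \<in> borel_measurable (F T) \<and> integrable M (\<lambda>w. (X w)^2)"
      unfolding X_def by (rule wealth_ok[OF order_refl uok])
    have iX: "integrable M X" using shift_ok(3)[OF order_refl conjunct1[OF XW] conjunct2[OF XW]] .
    have iX2: "integrable M (\<lambda>w. (X w)^2)" using XW by simp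
    have V: "variance X = expectation (\<lambda>w. (X w)^2) - (expectation X)^2"
      using variance_eq[OF iX iX2] .
    have hyp: "Pi*(S*x0-g)^2 \<le> expectation (\<lambda>w. (X w)^2) - 2*g*expectation X + g^2" for g
    proof -
      have lb: "(\<Prod>k<T. (s k)^2 * (1 - Bval M (P k))) * (x0 - ccg g 0)^2
          \<le> integral\<^sup>L M (\<lambda>w. (wealth s P u x0 T w - ccg g T)^2)"
        by (rule lower_bound[OF order_refl admu])
      have "(\<Prod>k<T. (s k)^2 * (1 - Bval M (P k))) * (x0 - ccg g 0)^2 = S^2*Pi*(x0 - g/S)^2"
        unfolding cc0 prod.distrib prod_power_distrib[symmetric] S_def Pi_def ..
      also have "\<dots> = Pi*(S*x0-g)^2" by (rule alg_LB[OF Sp])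
      finally have a: "Pi*(S*x0-g)^2 \<le> integral\<^sup>L M (\<lambda>w. (X w - g)^2)"
        using lb unfolding ccg_T X_def by simp
      have "(\<lambda>w. (X w - g)^2) = (\<lambda>w. (X w)^2 + (-2*g) * X w + g^2)"
        by (rule ext) (simp add: power2_diff)
      then have "integral\<^sup>L M (\<lambda>w. (X w - g)^2) = expectation (\<lambda>w. (X w)^2) - 2*g*expectation X + g^2"
        using iX iX2 by (simp add: prob_space)
      then show ?thesis using a by simp
    qed
    have "expectation X - wT * variance X \<le> S*x0 + (1-Pi)/(4*wT*Pi)"
      unfolding V by (rule mv_alg[OF Pp Pl w hyp])
    then show ?thesis unfolding X_def .
  qed
  show ?thesis using adm OPT JU EW VW unfolding Pi_def by simp
qed

end

theorem mainTheorem2: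
  fixes M :: "'a measure" and P :: "nat \<Rightarrow> 'a \<Rightarrow> real^'n"
    and s :: "nat \<Rightarrow> real" and T :: nat and x0 :: real and wT :: real
  assumes "prob_space M"
    and "T \<ge> 1"
    and "\<And>t. t < T \<Longrightarrow> s t > 1"
    and "\<And>t. t < T \<Longrightarrow> P t \<in> borel_measurable M"
    and "prob_space.indep_vars M (\<lambda>_. borel) P {..<T}"
    and "\<And>t. t < T \<Longrightarrow> integrable M (\<lambda>w. (norm (P t w))\<^sup>2)"
    and "\<And>t x. t < T \<Longrightarrow> x \<noteq> 0 \<Longrightarrow> x \<bullet> (mom2 M (P t) *v x) > 0"
    and "\<And>t. t < T \<Longrightarrow> 0 < Bval M (P t) \<and> Bval M (P t) < 1"
    and "wT > 0"
  defines "ustar \<equiv> \<lambda>t w. mv_feedback M P s T x0 wT t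
              (fb_wealth s P (mv_feedback M P s T x0 wT) x0 t w)"
    and "J \<equiv> \<lambda>u. prob_space.expectation M (wealth s P u x0 T)
              - wT * prob_space.variance M (wealth s P u x0 T)"
  shows "admissible M P T ustar
    \<and> (\<forall>u. admissible M P T u \<longrightarrow> J u \<le> J ustar)
    \<and> (\<forall>t\<le>T. prob_space.expectation M (wealth s P ustar x0 t)
          = x0 * (\<Prod>k<t. s k) + 1 / (2 * wT) * (\<Prod>k\<in>{t..<T}. inverse (s k))
              * (1 - (\<Prod>k<t. 1 - Bval M (P k))) / (\<Prod>k<T. 1 - Bval M (P k)))
    \<and> prob_space.variance M (wealth s P ustar x0 T)
          = (1 - (\<Prod>k<T. 1 - Bval M (P k))) / (4 * wT\<^sup>2 * (\<Prod>k<T. 1 - Bval M (P k)))"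
proof -
  have L: "mvfull M P T s"
    unfolding mvfull_def mvsetup_def mvfull_axioms_def mvsetup_axioms_def using assms(1-8) by auto
  interpret mvfull M P T s by (rule L)
  have us: "ustar = us x0 wT" unfolding ustar_def us_def ..
  show ?thesis unfolding J_def us by (rule main[OF assms(2) assms(9)])
qed

end
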